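(* Let $s>0$, let $m,n\ge 1$ and $1\le k\le\min(m,n)$. Let $W$ be a random $m\times n$ matrix with entries $W_{ij}=1+s\Delta_{ij}$, where the $\Delta_{ij}$ are i.i.d. with a continuous distribution (with density) supported on $[-1,1]$ and symmetric around $0$. Call a square $k\times k$ submatrix $A$ of $W$ (determined by a choice of $k$ rows and $k$ columns) an equilibrium if there exist a real $a>1$ and vectors $x,y\in\mathbb{R}^k$ with nonnegative entries, each summing to $1$, such that $Ax=a\mathbf{1}$ and $A^Ty=a\mathbf{1}$, where $\mathbf{1}$ is the all-ones vector. Then the expected number of $k\times k$ submatrices of $W$ that are equilibria is at least $2\left(\frac{mn}{4k^2}\right)^k$. *)

theory Defs
  imports "HOL-Probability.Probability"
begin

definition is_equilibrium :: "(nat \<Rightarrow> nat \<Rightarrow> real) \<Rightarrow> nat set \<Rightarrow> nat set \<Rightarrow> bool" where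
  "is_equilibrium W R C \<longleftrightarrow>
     (\<exists>a > 1. \<exists>x y.
        (\<forall>j\<in>C. x j \<ge> 0) \<and> (\<Sum>j\<in>C. x j) = 1 \<and>
        (\<forall>i\<in>R. y i \<ge> 0) \<and> (\<Sum>i\<in>R. y i) = 1 \<and>
        (\<forall>i\<in>R. (\<Sum>j\<in>C. W i j * x j) = a) \<and>
        (\<forall>j\<in>C. (\<Sum>i\<in>R. W i j * y i) = a))"

definition num_equilibria :: "nat \<Rightarrow> nat \<Rightarrow> nat \<Rightarrow> (nat \<Rightarrow> nat \<Rightarrow> real) \<Rightarrow> nat" where
  "num_equilibria m n k W =
     card {(R, C). R \<subseteq> {..<m} \<and> card R = k \<and> C \<subseteq> {..<n} \<and> card C = k \<and>
                   is_equilibrium W R C}"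

end

theory Submission
  imports Defs "Jordan_Normal_Form.Determinant"
begin


definition Mt :: "nat \<Rightarrow> (nat \<Rightarrow> nat \<Rightarrow> real) \<Rightarrow> real mat" where
  "Mt k F = mat k k (\<lambda>(a,b). F a b)"
definition dt :: "nat \<Rightarrow> (nat \<Rightarrow> nat \<Rightarrow> real) \<Rightarrow> real" where
  "dt k F = det (Mt k F)"

lemma Mt_carrier[simp]: "Mt k F \<in> carrier_mat k k" by (simp add: Mt_def)

lemma dt_cong: assumes "\<And>a b. a < k \<Longrightarrow> b < k \<Longrightarrow> F a b = G a b"
  shows "dt k F = dt k G"
proof -
  have "Mt k F = Mt k G" unfolding Mt_def by (rule eq_matI) (auto simp: assms)
  thus ?thesis by (simp add: dt_def)
qed

lemma dt_transpose: "dt k (\<lambda>a b. F b a) = dt k F"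
proof -
  have "Mt k (\<lambda>a b. F b a) = transpose_mat (Mt k F)" unfolding Mt_def
    by (rule eq_matI) auto
  thus ?thesis unfolding dt_def using det_transpose[OF Mt_carrier] by simp
qed

lemma Mt_mult_vec: "Mt k F *\<^sub>v vec k u = vec k (\<lambda>a. \<Sum>b<k. F a b * u b)"
  by (rule eq_vecI) (auto simp: Mt_def scalar_prod_def lessThan_atLeast0)

lemma dt_cramer: assumes "\<And>a. a < k \<Longrightarrow> (\<Sum>b<k. F a b * u b) = z a" and "j < k"
  shows "dt k (\<lambda>a b. if b = j then z a else F a b) = u j * dt k F"
proof -
  have "Mt k F *\<^sub>v vec k u = vec k z" using assms(1) by (auto simp: Mt_mult_vec intro!: eq_vecI)
  moreover have "replace_col (Mt k F) (vec k z) j = Mt k (\<lambda>a b. if b = j then z a else F a b)"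
    unfolding replace_col_def Mt_def by (rule eq_matI) auto
  ultimately show ?thesis using cramer_lemma_mat[of "Mt k F" k "vec k u" j] assms(2)
    by (simp add: dt_def)
qed

lemma dt_nonsing: "dt k F \<noteq> 0 \<longleftrightarrow> (\<forall>u. (\<forall>a<k. (\<Sum>b<k. F a b * u b) = 0) \<longrightarrow> (\<forall>b<k. u b = 0))"
proof -
  have "dt k F = 0 \<longleftrightarrow> (\<exists>v. v \<in> carrier_vec k \<and> v \<noteq> 0\<^sub>v k \<and> Mt k F *\<^sub>v v = 0\<^sub>v k)"
    unfolding dt_def by (rule det_0_iff_vec_prod_zero_field[OF Mt_carrier])
  also have "\<dots> \<longleftrightarrow> (\<exists>u. (\<forall>a<k. (\<Sum>b<k. F a b * u b) = 0) \<and> \<not>(\<forall>b<k. u b = 0))"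
  proof
    assume "\<exists>v. v \<in> carrier_vec k \<and> v \<noteq> 0\<^sub>v k \<and> Mt k F *\<^sub>v v = 0\<^sub>v k"
    then obtain v where v: "v \<in> carrier_vec k" "v \<noteq> 0\<^sub>v k" "Mt k F *\<^sub>v v = 0\<^sub>v k" by blast
    have vv: "v = vec k (\<lambda>i. v $ i)" using v(1) by (auto intro!: eq_vecI)
    have "vec k (\<lambda>a. \<Sum>b<k. F a b * v $ b) = 0\<^sub>v k" using v(3) Mt_mult_vec[of k F "\<lambda>i. v $ i"] vv by simp
    hence 1: "\<forall>a<k. (\<Sum>b<k. F a b * v $ b) = 0"
      by (metis index_vec index_zero_vec(1))
    have "\<not>(\<forall>b<k. v $ b = 0)" using v(1,2) by (auto intro!: eq_vecI)
    with 1 show "\<exists>u. (\<forall>a<k. (\<Sum>b<k. F a b * u b) = 0) \<and> \<not>(\<forall>b<k. u b = 0)" by blast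
  next
    assume "\<exists>u. (\<forall>a<k. (\<Sum>b<k. F a b * u b) = 0) \<and> \<not>(\<forall>b<k. u b = 0)"
    then obtain u where u: "\<forall>a<k. (\<Sum>b<k. F a b * u b) = 0" "\<not>(\<forall>b<k. u b = 0)" by blast
    have "Mt k F *\<^sub>v vec k u = 0\<^sub>v k" using u(1) by (auto simp: Mt_mult_vec intro!: eq_vecI)
    moreover have "vec k u \<noteq> 0\<^sub>v k" using u(2) by (metis index_vec index_zero_vec(1))
    ultimately show "\<exists>v. v \<in> carrier_vec k \<and> v \<noteq> 0\<^sub>v k \<and> Mt k F *\<^sub>v v = 0\<^sub>v k" using vec_carrier by blast
  qed
  finally show ?thesis by blast
qed

lemma sum_ifdelta: "finite A \<Longrightarrow> (\<Sum>ia\<in>A. (if i = ia then c else 0) * (g ia :: real)) = (if i \<in> A then c * g i else 0)"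
proof -
  have "(\<lambda>ia. (if i = ia then c else 0) * g ia) = (\<lambda>ia. if i = ia then c * g ia else 0)" by auto
  moreover assume "finite A"
  ultimately show ?thesis by (simp only:) simp
qed

lemma sum_ifdelta2: "finite A \<Longrightarrow> (\<Sum>ia\<in>A. c * (if i = ia then 1 else 0) * (g ia :: real)) = (if i \<in> A then c * g i else 0)"
proof -
  have "(\<lambda>ia. c * (if i = ia then 1 else 0) * g ia) = (\<lambda>ia. if i = ia then c * g ia else 0)" by auto
  moreover assume "finite A"
  ultimately show ?thesis by (simp only:) simp
qed

lemma dt_solve: assumes "dt k F \<noteq> 0"
  shows "\<exists>u. \<forall>a<k. (\<Sum>b<k. F a b * u b) = z a"
proof -
  let ?A = "Mt k F"
  define v where "v = (1 / dt k F) \<cdot>\<^sub>v (adj_mat ?A *\<^sub>v vec k z)"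
  have adj: "adj_mat ?A \<in> carrier_mat k k" "?A * adj_mat ?A = det ?A \<cdot>\<^sub>m 1\<^sub>m k"
    using adj_mat[OF Mt_carrier] by auto
  have vc: "v \<in> carrier_vec k" using adj unfolding v_def by auto
  have "?A *\<^sub>v v = (1 / dt k F) \<cdot>\<^sub>v (?A *\<^sub>v (adj_mat ?A *\<^sub>v vec k z))"
    unfolding v_def using adj by (intro mult_mat_vec[OF Mt_carrier]) auto
  also have "?A *\<^sub>v (adj_mat ?A *\<^sub>v vec k z) = (?A * adj_mat ?A) *\<^sub>v vec k z"
    using adj by (metis Mt_carrier assoc_mult_mat_vec vec_carrier)
  also have "\<dots> = (dt k F \<cdot>\<^sub>m 1\<^sub>m k) *\<^sub>v vec k z" using adj(2) by (simp add: dt_def)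
  also have "\<dots> = dt k F \<cdot>\<^sub>v vec k z"
    by (rule eq_vecI) (auto simp: scalar_prod_def Matrix.row_def sum_ifdelta sum_ifdelta2)
  finally have "?A *\<^sub>v v = vec k z" using assms by (auto intro!: eq_vecI)
  moreover have "v = vec k (\<lambda>i. v $ i)" using vc by (auto intro!: eq_vecI)
  ultimately have "vec k (\<lambda>a. \<Sum>b<k. F a b * v $ b) = vec k z" by (metis Mt_mult_vec)
  hence "\<forall>a<k. (\<Sum>b<k. F a b * v $ b) = z a" by (metis index_vec)
  thus ?thesis by blast
qed



definition goodE :: "nat \<Rightarrow> (nat \<Rightarrow> nat \<Rightarrow> real) \<Rightarrow> bool" where
  "goodE k F \<longleftrightarrow> dt k F \<noteq> 0 \<and>
     (\<forall>b<k. 0 \<le> dt k (\<lambda>a b'. if b' = b then 1 else F a b') / dt k F) \<and>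
     (\<forall>a<k. 0 \<le> dt k (\<lambda>a' b. if a' = a then 1 else F a' b) / dt k F)"

lemma goodE_cong: assumes "\<And>a b. a < k \<Longrightarrow> b < k \<Longrightarrow> F a b = G a b"
  shows "goodE k F = goodE k G"
proof -
  have 1: "dt k F = dt k G" by (rule dt_cong) (simp add: assms)
  have 2: "dt k (\<lambda>a b'. if b' = b then 1 else F a b') = dt k (\<lambda>a b'. if b' = b then 1 else G a b')" for b
    by (rule dt_cong) (simp add: assms)
  have 3: "dt k (\<lambda>a' b. if a' = a then 1 else F a' b) = dt k (\<lambda>a' b. if a' = a then 1 else G a' b)" for a
    by (rule dt_cong) (simp add: assms)
  show ?thesis unfolding goodE_def 1 2 3 ..
qed

lemma dt_cramer_row: assumes "\<And>b. b < k \<Longrightarrow> (\<Sum>a<k. F a b * v a) = 1" and "j < k"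
  shows "dt k (\<lambda>a' b. if a' = j then 1 else F a' b) = v j * dt k F"
proof -
  have "dt k (\<lambda>a' b. if a' = j then 1 else F a' b) = dt k (\<lambda>b a'. if a' = j then 1 else F a' b)"
    using dt_transpose[of k "\<lambda>a' b. if a' = j then 1 else F a' b"] by simp
  also have "\<dots> = v j * dt k (\<lambda>b a. F a b)"
    by (rule dt_cramer[of k "\<lambda>b a. F a b" v "\<lambda>_. 1"]) (use assms in auto)
  also have "dt k (\<lambda>b a. F a b) = dt k F" by (rule dt_transpose)
  finally show ?thesis .
qed

lemma goodE_intro:
  assumes "dt k F \<noteq> 0"
    and "\<And>a. a < k \<Longrightarrow> (\<Sum>b<k. F a b * u b) = 1" and "\<And>b. b < k \<Longrightarrow> u b \<ge> 0"
    and "\<And>b. b < k \<Longrightarrow> (\<Sum>a<k. F a b * v a) = 1" and "\<And>a. a < k \<Longrightarrow> v a \<ge> 0"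
  shows "goodE k F"
  unfolding goodE_def
  using assms dt_cramer[of k F u "\<lambda>_. 1"] dt_cramer_row[of k F v] by auto

lemma goodE_sol:
  assumes "goodE k F"
  shows "\<exists>u v. (\<forall>a<k. (\<Sum>b<k. F a b * u b) = 1) \<and> (\<forall>b<k. u b \<ge> 0) \<and>
     (\<forall>b<k. (\<Sum>a<k. F a b * v a) = 1) \<and> (\<forall>a<k. v a \<ge> 0)"
proof -
  have d: "dt k F \<noteq> 0" using assms by (simp add: goodE_def)
  obtain u where u: "\<forall>a<k. (\<Sum>b<k. F a b * u b) = 1" using dt_solve[OF d, of "\<lambda>_. 1"] by blast
  have dT: "dt k (\<lambda>b a. F a b) \<noteq> 0" using d dt_transpose[of k F] by simp
  obtain v where v: "\<forall>b<k. (\<Sum>a<k. F a b * v a) = 1" using dt_solve[OF dT, of "\<lambda>_. 1"] by blast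
  have "u b \<ge> 0" if "b < k" for b
    using assms that d dt_cramer[of k F u "\<lambda>_. 1" b] u by (auto simp: goodE_def)
  moreover have "v a \<ge> 0" if "a < k" for a
    using assms that d dt_cramer_row[of k F v a] v by (auto simp: goodE_def)
  ultimately show ?thesis using u v by blast
qed

definition SV :: "nat \<Rightarrow> (nat \<Rightarrow> real) set" where
  "SV k = PiE {..<k} (\<lambda>_. {-1, 1})"

lemma flip_sum: fixes k :: nat assumes "b < k"
  shows "(\<Sum>b'<k. (e(b := - e b)) b' * (x b' :: real)) = (\<Sum>b'<k. e b' * x b') - 2 * e b * x b"
proof -
  have "(\<Sum>b'<k. (e(b := - e b)) b' * x b') = (\<Sum>b'<k. e b' * x b' - (if b' = b then 2 * e b * x b else 0))"
    by (rule sum.cong) auto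
  also have "\<dots> = (\<Sum>b'<k. e b' * x b') - (\<Sum>b'<k. (if b' = b then 2 * e b * x b else 0))"
    by (rule sum_subtractf)
  also have "(\<Sum>b'<k. (if b' = b then 2 * e b * x b else 0)) = 2 * e b * x b"
    using assms by simp
  finally show ?thesis .
qed

lemma SV_flip: "e \<in> SV k \<Longrightarrow> b < k \<Longrightarrow> e(b := - e b) \<in> SV k"
  unfolding SV_def by (auto simp: PiE_def Pi_def extensional_def)

lemma SV_sq: "e \<in> SV k \<Longrightarrow> b < k \<Longrightarrow> e b * e b = 1"
  unfolding SV_def by (auto simp: PiE_def Pi_def)

lemma orbit:
  assumes k: "k \<ge> 1" and d: "dt k F \<noteq> 0"
  shows "2 \<le> card {p \<in> SV k \<times> SV k. goodE k (\<lambda>a b. fst p a * F a b * snd p b)}"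
proof -
  have "\<forall>d. \<exists>x. \<forall>a<k. (\<Sum>b<k. F a b * x b) = d a" using dt_solve[OF d] by blast
  then obtain u where u: "\<And>d a. a < k \<Longrightarrow> (\<Sum>b<k. F a b * u d b) = d a" by metis
  have dT: "dt k (\<lambda>b a. F a b) \<noteq> 0" using d dt_transpose[of k F] by simp
  have "\<forall>e. \<exists>x. \<forall>b<k. (\<Sum>a<k. F a b * x a) = e b" using dt_solve[OF dT] by blast
  then obtain w where w: "\<And>e b. b < k \<Longrightarrow> (\<Sum>a<k. F a b * w e a) = e b" by metis
  define Q where "Q p = (\<Sum>a<k. fst p a * w (snd p) a)" for p
  have Qalt: "Q (d', e') = (\<Sum>b<k. e' b * u d' b)" for d' e'
  proof -
    have "(\<Sum>b<k. e' b * u d' b) = (\<Sum>b<k. (\<Sum>a<k. F a b * w e' a) * u d' b)"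
      by (rule sum.cong) (auto simp: w)
    also have "\<dots> = (\<Sum>a<k. w e' a * (\<Sum>b<k. F a b * u d' b))"
      by (simp add: sum_distrib_left sum_distrib_right mult_ac) (rule sum.swap)
    also have "\<dots> = (\<Sum>a<k. d' a * w e' a)"
      by (rule sum.cong) (auto simp: u)
    finally show ?thesis by (simp add: Q_def)
  qed
  define SS where "SS = SV k \<times> SV k"
  have finSS: "finite SS" unfolding SS_def SV_def by (auto intro!: finite_PiE)
  have "(\<lambda>_\<in>{..<k}. 1, \<lambda>_\<in>{..<k}. 1) \<in> SS" unfolding SS_def SV_def by auto
  hence neSS: "SS \<noteq> {}" by blast
  define q where "q = Max (Q ` SS)"
  have "q \<in> Q ` SS" unfolding q_def using finSS neSS by (intro Max_in) auto
  then obtain p0 where p0: "p0 \<in> SS" "Q p0 = q" by blast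
  have qmax: "Q p \<le> q" if "p \<in> SS" for p unfolding q_def using finSS that by (intro Max_ge) auto
  define d0 where "d0 = fst p0"
  define e0 where "e0 = snd p0"
  have d0S: "d0 \<in> SV k" and e0S: "e0 \<in> SV k" using p0 by (auto simp: SS_def d0_def e0_def)
  have p0eq: "p0 = (d0, e0)" by (simp add: d0_def e0_def)
  have unn: "e0 b * u d0 b \<ge> 0" if b: "b < k" for b
  proof -
    have "(d0, e0(b := - e0 b)) \<in> SS" using d0S e0S SV_flip[OF e0S b] by (simp add: SS_def)
    hence "Q (d0, e0(b := - e0 b)) \<le> Q (d0, e0)" using qmax p0 p0eq by auto
    thus ?thesis unfolding Qalt flip_sum[OF b] by simp
  qed
  have wnn: "d0 a * w e0 a \<ge> 0" if a: "a < k" for a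
  proof -
    have "(d0(a := - d0 a), e0) \<in> SS" using d0S e0S SV_flip[OF d0S a] by (simp add: SS_def)
    hence "Q (d0(a := - d0 a), e0) \<le> Q (d0, e0)" using qmax p0 p0eq by auto
    thus ?thesis unfolding Q_def fst_conv snd_conv flip_sum[OF a] by simp
  qed
  define F' where "F' a b = d0 a * F a b * e0 b" for a b
  have good0: "goodE k F'"
  proof (rule goodE_intro[where u = "\<lambda>b. e0 b * u d0 b" and v = "\<lambda>a. d0 a * w e0 a"])
    show "dt k F' \<noteq> 0" unfolding dt_nonsing
    proof (rule allI, rule impI)
      fix x assume x: "\<forall>a<k. (\<Sum>b<k. F' a b * x b) = 0"
      have "\<forall>a<k. (\<Sum>b<k. F a b * (e0 b * x b)) = 0"
      proof (intro allI impI)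
        fix a assume a: "a < k"
        have "d0 a * (\<Sum>b<k. F' a b * x b) = (\<Sum>b<k. (d0 a * d0 a) * (F a b * (e0 b * x b)))"
          by (simp add: F'_def sum_distrib_left mult_ac)
        hence "(\<Sum>b<k. F a b * (e0 b * x b)) = d0 a * (\<Sum>b<k. F' a b * x b)"
          using SV_sq[OF d0S a] by simp
        thus "(\<Sum>b<k. F a b * (e0 b * x b)) = 0" using x a by simp
      qed
      moreover have nz: "\<forall>u. (\<forall>a<k. (\<Sum>b<k. F a b * u b) = 0) \<longrightarrow> (\<forall>b<k. u b = 0)"
        using d dt_nonsing by blast
      ultimately have z: "\<forall>b<k. e0 b * x b = 0" using nz[THEN spec, of "\<lambda>b. e0 b * x b"] by simp
      show "\<forall>b<k. x b = 0"
      proof (intro allI impI)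
        fix b assume b: "b < k"
        have "x b = e0 b * (e0 b * x b)" using SV_sq[OF e0S b] by (simp add: mult.assoc[symmetric])
        thus "x b = 0" using z b by simp
      qed
    qed
  next
    fix a assume a: "a < k"
    have "(\<Sum>b<k. F' a b * (e0 b * u d0 b)) = d0 a * (\<Sum>b<k. F a b * u d0 b)"
      by (rule trans[OF _ sum_distrib_left[symmetric]], rule sum.cong)
        (auto simp: F'_def SV_sq[OF e0S] mult_ac)
    thus "(\<Sum>b<k. F' a b * (e0 b * u d0 b)) = 1" using u[OF a] SV_sq[OF d0S a] by simp
  next
    fix b assume b: "b < k"
    have "(\<Sum>a<k. F' a b * (d0 a * w e0 a)) = e0 b * (\<Sum>a<k. F a b * w e0 a)"
      by (rule trans[OF _ sum_distrib_left[symmetric]], rule sum.cong)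
        (auto simp: F'_def SV_sq[OF d0S] mult_ac)
    thus "(\<Sum>a<k. F' a b * (d0 a * w e0 a)) = 1" using w[OF b] SV_sq[OF e0S b] by simp
  qed (use unn wnn in auto)
  define p1 where "p1 = (\<lambda>a\<in>{..<k}. - d0 a, \<lambda>b\<in>{..<k}. - e0 b)"
  have p1S: "p1 \<in> SS" using d0S e0S unfolding SS_def SV_def p1_def by (auto simp: PiE_def Pi_def)
  have good1: "goodE k (\<lambda>a b. fst p1 a * F a b * snd p1 b)"
    using good0 by (subst goodE_cong[where G = F']) (auto simp: p1_def F'_def)
  have "p0 \<noteq> p1"
  proof
    assume "p0 = p1"
    hence "d0 = fst p1" using p0eq by (metis fst_conv)
    hence "d0 0 = fst p1 0" by simp
    also have "\<dots> = - d0 0" using k by (simp add: p1_def)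
    finally have "d0 0 = - d0 0" .
    moreover have "d0 0 \<in> {-1, 1}" using d0S k by (auto simp: SV_def PiE_def Pi_def)
    ultimately show False by auto
  qed
  have sub: "{p0, p1} \<subseteq> {p \<in> SV k \<times> SV k. goodE k (\<lambda>a b. fst p a * F a b * snd p b)}"
  proof -
    have F'eq: "F' = (\<lambda>a b. d0 a * F a b * e0 b)" by (simp add: F'_def fun_eq_iff)
    show ?thesis using p0 p1S good0[unfolded F'eq] good1 by (auto simp: SS_def p0eq)
  qed
  have "card {p0, p1} = 2" using \<open>p0 \<noteq> p1\<close> by simp
  moreover have "finite {p \<in> SV k \<times> SV k. goodE k (\<lambda>a b. fst p a * F a b * snd p b)}"
    using finSS unfolding SS_def by simp
  ultimately show ?thesis using card_mono[OF _ sub] by simp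
qed



lemma dt_expand: "dt k F = (\<Sum>p\<in>{p. p permutes {0..<k}}. signof p * (\<Prod>i=0..<k. F i (p i)))"
proof -
  have "dt k F = (\<Sum>p\<in>{p. p permutes {0..<k}}. signof p * (\<Prod>i=0..<k. Mt k F $$ (i, p i)))"
    unfolding dt_def by (rule det_def'[OF Mt_carrier])
  also have "\<dots> = (\<Sum>p\<in>{p. p permutes {0..<k}}. signof p * (\<Prod>i=0..<k. F i (p i)))"
    by (intro sum.cong refl arg_cong2[where f="(*)"] prod.cong) (auto simp: Mt_def permutes_in_image)
  finally show ?thesis .
qed

lemma measurable_dt:
  assumes "\<And>a b. a < k \<Longrightarrow> b < k \<Longrightarrow> (\<lambda>\<omega>. G \<omega> a b) \<in> borel_measurable M"
  shows "(\<lambda>\<omega>. dt k (G \<omega>)) \<in> borel_measurable M"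
  unfolding dt_expand
proof (intro borel_measurable_sum borel_measurable_times borel_measurable_prod measurable_const)
  fix p i assume p: "p \<in> {p. p permutes {0..<k}}" and i: "i \<in> {0..<k}"
  have "p i \<in> {0..<k}" using p i by (simp add: permutes_in_image)
  thus "(\<lambda>\<omega>. G \<omega> i (p i)) \<in> borel_measurable M" using i by (intro assms) auto
qed auto

lemma sets_goodE:
  assumes G: "\<And>a b. a < k \<Longrightarrow> b < k \<Longrightarrow> (\<lambda>\<omega>. G \<omega> a b) \<in> borel_measurable M"
  shows "{\<omega>\<in>space M. goodE k (G \<omega>)} \<in> sets M"
proof -
  have [measurable]: "(\<lambda>\<omega>. dt k (G \<omega>)) \<in> borel_measurable M" by (rule measurable_dt[OF G])
  have [measurable]: "(\<lambda>\<omega>. dt k (\<lambda>a b'. if b' = b then 1 else G \<omega> a b')) \<in> borel_measurable M" for b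
  proof (rule measurable_dt)
    fix a b' assume "a < k" "b' < k"
    thus "(\<lambda>\<omega>. if b' = b then 1 else G \<omega> a b') \<in> borel_measurable M"
      by (cases "b' = b") (simp_all add: G)
  qed
  have [measurable]: "(\<lambda>\<omega>. dt k (\<lambda>a' b. if a' = a then 1 else G \<omega> a' b)) \<in> borel_measurable M" for a
  proof (rule measurable_dt)
    fix a' b assume "a' < k" "b < k"
    thus "(\<lambda>\<omega>. if a' = a then 1 else G \<omega> a' b) \<in> borel_measurable M"
      by (cases "a' = a") (simp_all add: G)
  qed
  show ?thesis unfolding goodE_def by measurable
qed

lemma dt_zero[simp]: "dt 0 F = 1"
  unfolding dt_def by (rule det_dim_zero) simp

lemma dt_first:
  "dt (Suc k) F = F 0 0 * dt k (\<lambda>a b. F (Suc a) (Suc b)) + dt (Suc k) (\<lambda>a b. if a = 0 \<and> b = 0 then 0 else F a b)"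
proof -
  define A where "A = Mt (Suc k) F"
  define A0 where "A0 = Mt (Suc k) (\<lambda>a b. if a = 0 \<and> b = 0 then 0 else F a b)"
  have cof: "cofactor A0 0 j = cofactor A 0 j" for j
  proof -
    have "mat_delete A0 0 j = mat_delete A 0 j"
      by (rule eq_matI) (auto simp: A_def A0_def Mt_def mat_delete_def)
    thus ?thesis by (simp add: cofactor_def)
  qed
  have 1: "det A = (\<Sum>j<Suc k. A $$ (0,j) * cofactor A 0 j)"
    unfolding A_def by (rule laplace_expansion_row[OF Mt_carrier]) simp
  have 2: "det A0 = (\<Sum>j<Suc k. A0 $$ (0,j) * cofactor A 0 j)"
    unfolding cof[symmetric] A0_def by (rule laplace_expansion_row[OF Mt_carrier]) simp
  have "det A - det A0 = (\<Sum>j<Suc k. (A $$ (0,j) - A0 $$ (0,j)) * cofactor A 0 j)"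
    unfolding 1 2 by (simp add: sum_subtractf[symmetric] left_diff_distrib)
  also have "\<dots> = (\<Sum>j<Suc k. if j = 0 then F 0 0 * cofactor A 0 0 else 0)"
    by (rule sum.cong) (auto simp: A_def A0_def Mt_def)
  also have "\<dots> = F 0 0 * cofactor A 0 0" by simp
  also have "cofactor A 0 0 = dt k (\<lambda>a b. F (Suc a) (Suc b))"
  proof -
    have "mat_delete A 0 0 = Mt k (\<lambda>a b. F (Suc a) (Suc b))"
      by (rule eq_matI) (auto simp: A_def Mt_def mat_delete_def)
    thus ?thesis by (simp add: cofactor_def dt_def)
  qed
  finally show ?thesis by (simp add: dt_def A_def A0_def algebra_simps)
qed

lemma sum_if_card: "finite A \<Longrightarrow> (\<Sum>x\<in>A. if Q x then (1::ennreal) else 0) = of_nat (card {x\<in>A. Q x})"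
  by (simp add: sum.inter_filter[symmetric])

context
  fixes f :: "real \<Rightarrow> real"
  assumes fm[measurable]: "f \<in> borel_measurable borel"
    and fnn: "\<forall>x. 0 \<le> f x"
    and fint: "(\<integral>\<^sup>+ x. ennreal (f x) \<partial>lborel) = 1"
    and fsym: "\<forall>x. f (- x) = f x"
begin

definition "NN = density lborel (\<lambda>x. ennreal (f x))"

lemma sets_NN[measurable_cong, simp]: "sets NN = sets borel"
  by (simp add: NN_def)

lemma space_NN[simp]: "space NN = UNIV"
  by (simp add: NN_def)

lemma prob_NN: "prob_space NN"
  by (rule prob_spaceI) (simp add: NN_def emeasure_density fint)

lemma NN_point: "emeasure NN {y} = 0"
  by (simp add: NN_def emeasure_density)

lemma NN_sym: assumes A: "A \<in> sets borel" shows "emeasure NN {y. - y \<in> A} = emeasure NN A"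
proof -
  have [measurable]: "A \<in> sets borel" by fact
  have "emeasure NN A = (\<integral>\<^sup>+ x. ennreal (f x) * indicator A x \<partial>lborel)"
    by (simp add: NN_def emeasure_density)
  also have "\<dots> = ennreal \<bar>-1\<bar> * (\<integral>\<^sup>+ x. ennreal (f (0 + -1 * x)) * indicator A (0 + -1 * x) \<partial>lborel)"
    by (rule nn_integral_real_affine) auto
  also have "\<dots> = (\<integral>\<^sup>+ x. ennreal (f x) * indicator {y. - y \<in> A} x \<partial>lborel)"
    by (simp add: fsym indicator_def)
  also have "\<dots> = emeasure NN {y. - y \<in> A}"
    by (simp add: NN_def emeasure_density)
  finally show ?thesis ..
qed

definition "PP I = PiM I (\<lambda>_. NN)"

lemma prob_PP: "prob_space (PP I)"
proof -
  interpret product_prob_space "\<lambda>_. NN" by (rule product_prob_spaceI) (rule prob_NN)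
  show ?thesis unfolding PP_def by (rule prob_space_PiM) (rule prob_NN)
qed

lemma distr_flip:
  assumes I: "finite I" and \<sigma>: "\<And>p. p \<in> I \<Longrightarrow> \<sigma> p \<in> {-1, 1}"
  shows "distr (PP I) (PP I) (\<lambda>\<omega>. \<lambda>p\<in>I. \<sigma> p * \<omega> p) = PP I"
proof -
  interpret S: product_prob_space "\<lambda>_. NN" by (rule product_prob_spaceI) (rule prob_NN)
  have meas[measurable]: "(\<lambda>\<omega>. \<lambda>p\<in>I. \<sigma> p * \<omega> p) \<in> measurable (PP I) (PP I)"
    unfolding PP_def by measurable
  show ?thesis unfolding PP_def
  proof (rule S.PiM_eqI[OF I])
    show "sets (distr (Pi\<^sub>M I (\<lambda>_. NN)) (Pi\<^sub>M I (\<lambda>_. NN)) (\<lambda>\<omega>. \<lambda>p\<in>I. \<sigma> p * \<omega> p)) = sets (Pi\<^sub>M I (\<lambda>_. NN))"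
      by simp
  next
    fix A assume A: "\<And>i. i \<in> I \<Longrightarrow> A i \<in> sets NN"
    have "emeasure (distr (Pi\<^sub>M I (\<lambda>_. NN)) (Pi\<^sub>M I (\<lambda>_. NN)) (\<lambda>\<omega>. \<lambda>p\<in>I. \<sigma> p * \<omega> p)) (Pi\<^sub>E I A)
        = emeasure (Pi\<^sub>M I (\<lambda>_. NN)) ((\<lambda>\<omega>. \<lambda>p\<in>I. \<sigma> p * \<omega> p) -` Pi\<^sub>E I A \<inter> space (Pi\<^sub>M I (\<lambda>_. NN)))"
      by (rule emeasure_distr) (use meas A in \<open>auto simp: PP_def intro!: sets_PiM_I_finite I\<close>)
    also have "(\<lambda>\<omega>. \<lambda>p\<in>I. \<sigma> p * \<omega> p) -` Pi\<^sub>E I A \<inter> space (Pi\<^sub>M I (\<lambda>_. NN)) = Pi\<^sub>E I (\<lambda>i. {y. \<sigma> i * y \<in> A i})"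
      by (auto simp: space_PiM PiE_def Pi_def extensional_def)
    also have "emeasure (Pi\<^sub>M I (\<lambda>_. NN)) (Pi\<^sub>E I (\<lambda>i. {y. \<sigma> i * y \<in> A i})) = (\<Prod>i\<in>I. emeasure NN {y. \<sigma> i * y \<in> A i})"
    proof (rule S.emeasure_PiM[OF I])
      fix i assume i: "i \<in> I"
      have [measurable]: "A i \<in> sets borel" using A[OF i] by simp
      show "{y. \<sigma> i * y \<in> A i} \<in> sets NN" by simp
    qed
    also have "\<dots> = (\<Prod>i\<in>I. emeasure NN (A i))"
    proof (rule prod.cong[OF refl])
      fix i assume i: "i \<in> I"
      show "emeasure NN {y. \<sigma> i * y \<in> A i} = emeasure NN (A i)"
        using \<sigma>[OF i] NN_sym[of "A i"] A[OF i] by auto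
    qed
    finally show "emeasure (distr (Pi\<^sub>M I (\<lambda>_. NN)) (Pi\<^sub>M I (\<lambda>_. NN)) (\<lambda>\<omega>. \<lambda>p\<in>I. \<sigma> p * \<omega> p)) (Pi\<^sub>E I A) = (\<Prod>i\<in>I. emeasure NN (A i))" .
  qed
qed


lemma comp_PP[measurable]: "p \<in> I \<Longrightarrow> (\<lambda>\<omega>. \<omega> p) \<in> borel_measurable (PP I)"
  unfolding PP_def by measurable

lemma nonsing_AE:
  fixes I :: "('a \<times> 'b) set"
  assumes I: "finite I"
  shows "inj_on \<rho> {..<k} \<Longrightarrow> inj_on \<kappa> {..<k} \<Longrightarrow> (\<And>a b. a < k \<Longrightarrow> b < k \<Longrightarrow> (\<rho> a, \<kappa> b) \<in> I) \<Longrightarrow>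
    AE \<omega> in PP I. dt k (\<lambda>a b. \<omega> (\<rho> a, \<kappa> b)) \<noteq> 0"
proof (induction k arbitrary: \<rho> \<kappa>)
  case 0 then show ?case by simp
next
  case (Suc k)
  interpret S: product_prob_space "\<lambda>_::('a\<times>'b). NN" by (rule product_prob_spaceI) (rule prob_NN)
  define i0 where "i0 = (\<rho> 0, \<kappa> 0)"
  define I' where "I' = I - {i0}"
  have i0I: "i0 \<in> I" using Suc.prems(3)[of 0 0] by (simp add: i0_def)
  have II': "I = insert i0 I'" "i0 \<notin> I'" "finite I'" using i0I I by (auto simp: I'_def)
  define c where "c \<omega> = dt k (\<lambda>a b. \<omega> (\<rho> (Suc a), \<kappa> (Suc b)))" for \<omega> :: "'a\<times>'b \<Rightarrow> real"
  define r where "r \<omega> = dt (Suc k) (\<lambda>a b. if a = 0 \<and> b = 0 then 0 else \<omega> (\<rho> a, \<kappa> b))" for \<omega> :: "'a\<times>'b \<Rightarrow> real"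
  have decomp: "dt (Suc k) (\<lambda>a b. \<omega> (\<rho> a, \<kappa> b)) = \<omega> i0 * c \<omega> + r \<omega>" for \<omega>
    using dt_first[of k "\<lambda>a b. \<omega> (\<rho> a, \<kappa> b)"] by (simp add: c_def r_def i0_def)
  have neq: "(\<rho> a, \<kappa> b) \<noteq> i0" if "a < Suc k" "b < Suc k" "a \<noteq> 0 \<or> b \<noteq> 0" for a b
  proof
    assume "(\<rho> a, \<kappa> b) = i0"
    hence "\<rho> a = \<rho> 0" "\<kappa> b = \<kappa> 0" by (auto simp: i0_def)
    hence "a = 0" "b = 0" using Suc.prems(1,2) that(1,2) by (auto dest: inj_onD)
    thus False using that(3) by simp
  qed
  have c_upd: "c (w(i0 := y)) = c w" for w y
    unfolding c_def by (rule dt_cong) (use neq in auto)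
  have r_upd: "r (w(i0 := y)) = r w" for w y
    unfolding r_def by (rule dt_cong) (use neq in auto)
  have cm[measurable]: "c \<in> borel_measurable (PP I)"
    unfolding c_def by (rule measurable_dt) (use Suc.prems(3) in auto)
  have rm[measurable]: "r \<in> borel_measurable (PP I)"
    unfolding r_def
  proof (rule measurable_dt)
    fix a b assume ab: "a < Suc k" "b < Suc k"
    show "(\<lambda>\<omega>. if a = 0 \<and> b = 0 then 0 else \<omega> (\<rho> a, \<kappa> b)) \<in> borel_measurable (PP I)"
      by (cases "a = 0 \<and> b = 0") (use ab Suc.prems(3) in auto)
  qed
  have i0m[measurable]: "(\<lambda>\<omega>. \<omega> i0) \<in> borel_measurable (PP I)" using i0I by measurable
  define B where "B = {\<omega> \<in> space (PP I). c \<omega> \<noteq> 0 \<and> \<omega> i0 * c \<omega> + r \<omega> = 0}"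
  have gm: "(\<lambda>\<omega>. \<omega> i0 * c \<omega> + r \<omega>) \<in> borel_measurable (PP I)"
    by (intro borel_measurable_add borel_measurable_times cm rm i0m)
  have "B = (c -` (-{0}) \<inter> space (PP I)) \<inter> ((\<lambda>\<omega>. \<omega> i0 * c \<omega> + r \<omega>) -` {0} \<inter> space (PP I))"
    by (auto simp: B_def)
  also have "\<dots> \<in> sets (PP I)"
    by (intro sets.Int measurable_sets[OF cm] measurable_sets[OF gm]) auto
  finally have Bsets: "B \<in> sets (PP I)" .
  have PPeq: "PP I = PiM (insert i0 I') (\<lambda>_. NN)" using II' by (simp add: PP_def)
  have "emeasure (PP I) B = (\<integral>\<^sup>+\<omega>. indicator B \<omega> \<partial>(PP I))" using Bsets by simp
  also have "\<dots> = (\<integral>\<^sup>+x. (\<integral>\<^sup>+y. indicator B (x(i0:=y)) \<partial>NN) \<partial>(PiM I' (\<lambda>_. NN)))"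
    unfolding PPeq
    by (rule S.product_nn_integral_insert[OF II'(3,2)]) (use Bsets PPeq in simp)
  also have "\<dots> = (\<integral>\<^sup>+x. 0 \<partial>(PiM I' (\<lambda>_. NN)))"
  proof (rule nn_integral_cong)
    fix x assume x: "x \<in> space (PiM I' (\<lambda>_. NN))"
    have "(\<integral>\<^sup>+y. indicator B (x(i0:=y)) \<partial>NN) \<le> (\<integral>\<^sup>+y. indicator {- r x / c x} y \<partial>NN)"
    proof (rule nn_integral_mono)
      fix y
      show "indicator B (x(i0:=y)) \<le> (indicator {- r x / c x} y :: ennreal)"
      proof (cases "x(i0:=y) \<in> B")
        case True
        hence cx: "c x \<noteq> 0" and "y * c x + r x = 0" using c_upd[of x y] r_upd[of x y] by (auto simp: B_def)
        hence "y * c x = - r x" by linarith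
        hence "y = - r x / c x" using cx by (simp add: field_simps)
        thus ?thesis by (simp add: indicator_def)
      qed simp
    qed
    also have "\<dots> = emeasure NN {- r x / c x}" by simp
    also have "\<dots> = 0" by (rule NN_point)
    finally show "(\<integral>\<^sup>+y. indicator B (x(i0:=y)) \<partial>NN) = 0" by simp
  qed
  also have "\<dots> = 0" by simp
  finally have "B \<in> null_sets (PP I)" using Bsets by (simp add: null_sets_def)
  hence AEB: "AE \<omega> in PP I. \<omega> \<notin> B" by (rule AE_not_in)
  have AEc: "AE \<omega> in PP I. c \<omega> \<noteq> 0"
    unfolding c_def
  proof (rule Suc.IH)
    show "inj_on (\<lambda>a. \<rho> (Suc a)) {..<k}" using Suc.prems(1) by (auto simp: inj_on_def)
    show "inj_on (\<lambda>a. \<kappa> (Suc a)) {..<k}" using Suc.prems(2) by (auto simp: inj_on_def)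
  qed (use Suc.prems(3) in auto)
  show ?case using AE_space AEB AEc by eventually_elim (auto simp: B_def decomp)
qed

lemma sub_bound:
  fixes I :: "('a \<times> 'b) set"
  assumes I: "finite I" and k: "k \<ge> 1" and inj: "inj_on \<rho> {..<k}" "inj_on \<kappa> {..<k}"
    and inI: "\<And>a b. a < k \<Longrightarrow> b < k \<Longrightarrow> (\<rho> a, \<kappa> b) \<in> I"
  shows "2 \<le> of_nat (4^k) * emeasure (PP I) {\<omega>\<in>space (PP I). goodE k (\<lambda>a b. \<omega> (\<rho> a, \<kappa> b))}"
proof -
  interpret P: prob_space "PP I" by (rule prob_PP)
  define E where "E p = {\<omega>\<in>space (PP I). goodE k (\<lambda>a b. fst p a * \<omega> (\<rho> a, \<kappa> b) * snd p b)}"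
    for p :: "(nat\<Rightarrow>real) \<times> (nat\<Rightarrow>real)"
  define E0 where "E0 = {\<omega>\<in>space (PP I). goodE k (\<lambda>a b. \<omega> (\<rho> a, \<kappa> b))}"
  have Esets: "E p \<in> sets (PP I)" for p
    unfolding E_def
  proof (rule sets_goodE)
    fix a b assume "a < k" "b < k"
    hence q: "(\<rho> a, \<kappa> b) \<in> I" by (rule inI)
    show "(\<lambda>\<omega>. fst p a * \<omega> (\<rho> a, \<kappa> b) * snd p b) \<in> borel_measurable (PP I)"
      by (intro borel_measurable_times borel_measurable_const comp_PP q)
  qed
  have E0sets: "E0 \<in> sets (PP I)"
    unfolding E0_def by (rule sets_goodE) (rule comp_PP, rule inI)
  define SS where "SS = SV k \<times> SV k"
  have finSS: "finite SS" unfolding SS_def SV_def by (auto intro!: finite_PiE)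
  have cardSV: "card (SV k) = 2^k"
    unfolding SV_def by (simp add: card_PiE numeral_2_eq_2)
  have cardSS: "card SS = 4^k"
    unfolding SS_def card_cartesian_product cardSV by (simp add: power_mult_distrib[symmetric])
  have eqE: "emeasure (PP I) (E p) = emeasure (PP I) E0" if pS: "p \<in> SS" for p
  proof -
    obtain d e where p: "p = (d, e)" and dS: "d \<in> SV k" and eS: "e \<in> SV k"
      using pS by (auto simp: SS_def)
    define dd where "dd i = (if i \<in> \<rho> ` {..<k} then d (the_inv_into {..<k} \<rho> i) else 1)" for i
    define ee where "ee j = (if j \<in> \<kappa> ` {..<k} then e (the_inv_into {..<k} \<kappa> j) else 1)" for j
    define \<sigma> where "\<sigma> q = dd (fst q) * ee (snd q)" for q
    have ddv: "dd i \<in> {-1, 1}" for i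
    proof (cases "i \<in> \<rho> ` {..<k}")
      case True
      hence "the_inv_into {..<k} \<rho> i \<in> {..<k}" using inj(1) by (intro the_inv_into_into) auto
      thus ?thesis using True dS by (auto simp: dd_def SV_def PiE_def Pi_def)
    qed (simp add: dd_def)
    have eev: "ee j \<in> {-1, 1}" for j
    proof (cases "j \<in> \<kappa> ` {..<k}")
      case True
      hence "the_inv_into {..<k} \<kappa> j \<in> {..<k}" using inj(2) by (intro the_inv_into_into) auto
      thus ?thesis using True eS by (auto simp: ee_def SV_def PiE_def Pi_def)
    qed (simp add: ee_def)
    have \<sigma>v: "\<sigma> q \<in> {-1, 1}" for q using ddv[of "fst q"] eev[of "snd q"] by (auto simp: \<sigma>_def)
    have dd\<rho>: "dd (\<rho> a) = d a" if "a < k" for a using that by (simp add: dd_def the_inv_into_f_f[OF inj(1)])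
    have ee\<kappa>: "ee (\<kappa> b) = e b" if "b < k" for b using that by (simp add: ee_def the_inv_into_f_f[OF inj(2)])
    define \<Phi> where "\<Phi> \<omega> = (\<lambda>q\<in>I. \<sigma> q * \<omega> q)" for \<omega> :: "'a\<times>'b \<Rightarrow> real"
    have \<Phi>m: "\<Phi> \<in> measurable (PP I) (PP I)"
      unfolding \<Phi>_def PP_def by measurable
    have "emeasure (PP I) E0 = emeasure (distr (PP I) (PP I) \<Phi>) E0"
      unfolding \<Phi>_def using distr_flip[OF I, of \<sigma>] \<sigma>v by simp
    also have "\<dots> = emeasure (PP I) (\<Phi> -` E0 \<inter> space (PP I))"
      by (rule emeasure_distr[OF \<Phi>m]) (simp add: E0sets)
    also have "\<Phi> -` E0 \<inter> space (PP I) = E p"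
    proof -
      have "\<Phi> \<omega> \<in> space (PP I)" for \<omega>
        by (simp add: \<Phi>_def PP_def space_PiM)
      moreover have "goodE k (\<lambda>a b. \<Phi> \<omega> (\<rho> a, \<kappa> b)) = goodE k (\<lambda>a b. d a * \<omega> (\<rho> a, \<kappa> b) * e b)" for \<omega>
        by (rule goodE_cong) (simp add: \<Phi>_def \<sigma>_def inI dd\<rho> ee\<kappa>)
      ultimately show ?thesis by (auto simp: E0_def E_def p)
    qed
    finally show ?thesis by simp
  qed
  have AEns: "AE \<omega> in PP I. dt k (\<lambda>a b. \<omega> (\<rho> a, \<kappa> b)) \<noteq> 0"
    by (rule nonsing_AE[OF I]) (use inj inI in auto)
  have "(2::ennreal) = (\<integral>\<^sup>+\<omega>. 2 \<partial>(PP I))" by (simp add: P.emeasure_space_1)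
  also have "\<dots> \<le> (\<integral>\<^sup>+\<omega>. (\<Sum>p\<in>SS. indicator (E p) \<omega>) \<partial>(PP I))"
  proof (rule nn_integral_mono_AE)
    show "AE \<omega> in PP I. 2 \<le> (\<Sum>p\<in>SS. indicator (E p) \<omega> :: ennreal)"
      using AE_space AEns
    proof eventually_elim
      case (elim \<omega>)
      have "(\<Sum>p\<in>SS. indicator (E p) \<omega> :: ennreal)
          = (\<Sum>p\<in>SS. if goodE k (\<lambda>a b. fst p a * \<omega> (\<rho> a, \<kappa> b) * snd p b) then 1 else 0)"
        using elim by (intro sum.cong) (auto simp: E_def indicator_def)
      also have "\<dots> = of_nat (card {p\<in>SS. goodE k (\<lambda>a b. fst p a * \<omega> (\<rho> a, \<kappa> b) * snd p b)})"
        by (rule sum_if_card[OF finSS])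
      finally have eq: "(\<Sum>p\<in>SS. indicator (E p) \<omega> :: ennreal) = of_nat (card {p\<in>SS. goodE k (\<lambda>a b. fst p a * \<omega> (\<rho> a, \<kappa> b) * snd p b)})" .
      have "2 \<le> card {p\<in>SS. goodE k (\<lambda>a b. fst p a * \<omega> (\<rho> a, \<kappa> b) * snd p b)}"
        unfolding SS_def by (rule orbit[OF k elim(2)])
      hence "(of_nat 2::ennreal) \<le> of_nat (card {p\<in>SS. goodE k (\<lambda>a b. fst p a * \<omega> (\<rho> a, \<kappa> b) * snd p b)})"
        by (rule of_nat_mono)
      hence c2: "(2::ennreal) \<le> of_nat (card {p\<in>SS. goodE k (\<lambda>a b. fst p a * \<omega> (\<rho> a, \<kappa> b) * snd p b)})"
        by simp
      show ?case unfolding eq by (rule c2)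
    qed
  qed
  also have "\<dots> = (\<Sum>p\<in>SS. (\<integral>\<^sup>+\<omega>. indicator (E p) \<omega> \<partial>(PP I)))"
    by (rule nn_integral_sum) (rule borel_measurable_indicator, rule Esets)
  also have "\<dots> = (\<Sum>p\<in>SS. emeasure (PP I) (E p))"
    by (rule sum.cong) (simp_all add: Esets)
  also have "\<dots> = (\<Sum>p\<in>SS. emeasure (PP I) E0)"
    by (rule sum.cong) (simp_all add: eqE)
  also have "\<dots> = of_nat (4^k) * emeasure (PP I) E0"
    by (simp add: cardSS)
  finally show ?thesis by (simp only: E0_def)
qed

end



lemma good_equil:
  assumes s: "s > 0" and k: "k \<ge> 1" and \<rho>: "bij_betw \<rho> {..<k} R" and \<kappa>: "bij_betw \<kappa> {..<k} C"
    and g: "goodE k (\<lambda>a b. w (\<rho> a, \<kappa> b))"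
  shows "is_equilibrium (\<lambda>i j. 1 + s * w (i, j)) R C"
proof -
  define F where "F a b = w (\<rho> a, \<kappa> b)" for a b
  obtain u v where u: "\<forall>a<k. (\<Sum>b<k. F a b * u b) = 1" "\<forall>b<k. u b \<ge> 0"
    and v: "\<forall>b<k. (\<Sum>a<k. F a b * v a) = 1" "\<forall>a<k. v a \<ge> 0"
    using goodE_sol[OF g] unfolding F_def by blast
  define su where "su = (\<Sum>b<k. u b)"
  define sv where "sv = (\<Sum>a<k. v a)"
  have su0: "su \<ge> 0" unfolding su_def using u(2) by (auto intro!: sum_nonneg)
  have "su \<noteq> 0"
  proof
    assume "su = 0"
    hence "\<forall>b\<in>{..<k}. u b = 0" unfolding su_def using u(2) by (subst (asm) sum_nonneg_eq_0_iff) auto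
    hence "(\<Sum>b<k. F 0 b * u b) = 0" by simp
    moreover have "(\<Sum>b<k. F 0 b * u b) = 1" using u(1) k by simp
    ultimately show False by simp
  qed
  hence supos: "su > 0" using su0 by simp
  have "sv = (\<Sum>a<k. v a * (\<Sum>b<k. F a b * u b))" unfolding sv_def using u(1) by simp
  also have "\<dots> = (\<Sum>b<k. u b * (\<Sum>a<k. F a b * v a))"
    by (simp add: sum_distrib_left mult_ac) (rule sum.swap)
  also have "\<dots> = su" unfolding su_def using v(1) by simp
  finally have svsu: "sv = su" .
  define \<rho>i where "\<rho>i = the_inv_into {..<k} \<rho>"
  define \<kappa>i where "\<kappa>i = the_inv_into {..<k} \<kappa>"
  have \<rho>i: "\<rho>i (\<rho> a) = a" if "a < k" for a
    using that \<rho> by (simp add: \<rho>i_def the_inv_into_f_f bij_betw_def)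
  have \<kappa>i: "\<kappa>i (\<kappa> b) = b" if "b < k" for b
    using that \<kappa> by (simp add: \<kappa>i_def the_inv_into_f_f bij_betw_def)
  have \<rho>ii: "\<rho>i i < k" if "i \<in> R" for i
    using that \<rho> unfolding \<rho>i_def bij_betw_def by (metis lessThan_iff order_refl the_inv_into_into)
  have \<kappa>ii: "\<kappa>i j < k" if "j \<in> C" for j
    using that \<kappa> unfolding \<kappa>i_def bij_betw_def by (metis lessThan_iff order_refl the_inv_into_into)
  define x where "x j = u (\<kappa>i j) / su" for j
  define y where "y i = v (\<rho>i i) / su" for i
  have sumC: "(\<Sum>j\<in>C. g j) = (\<Sum>b<k. g (\<kappa> b))" for g :: "nat \<Rightarrow> real"
    using sum.reindex_bij_betw[OF \<kappa>, of g] by simp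
  have sumR: "(\<Sum>i\<in>R. g i) = (\<Sum>a<k. g (\<rho> a))" for g :: "nat \<Rightarrow> real"
    using sum.reindex_bij_betw[OF \<rho>, of g] by simp
  have \<rho>R: "\<rho> a \<in> R" if "a < k" for a using that \<rho> by (auto simp: bij_betw_def)
  have \<kappa>C: "\<kappa> b \<in> C" if "b < k" for b using that \<kappa> by (auto simp: bij_betw_def)
  have R\<rho>: "\<exists>a<k. i = \<rho> a" if "i \<in> R" for i using that \<rho> by (auto simp: bij_betw_def)
  have C\<kappa>: "\<exists>b<k. j = \<kappa> b" if "j \<in> C" for j using that \<kappa> by (auto simp: bij_betw_def)
  have a1: "1 + s / su > 1" using s supos by simp
  have body: "(\<forall>j\<in>C. x j \<ge> 0) \<and> (\<Sum>j\<in>C. x j) = 1 \<and> (\<forall>i\<in>R. y i \<ge> 0) \<and> (\<Sum>i\<in>R. y i) = 1 \<and>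
     (\<forall>i\<in>R. (\<Sum>j\<in>C. (1 + s * w (i, j)) * x j) = 1 + s / su) \<and>
     (\<forall>j\<in>C. (\<Sum>i\<in>R. (1 + s * w (i, j)) * y i) = 1 + s / su)"
  proof (intro conjI ballI)
    show "0 \<le> x j" if "j \<in> C" for j using that u(2) \<kappa>ii supos by (simp add: x_def)
    show "0 \<le> y i" if "i \<in> R" for i using that v(2) \<rho>ii supos by (simp add: y_def)
    have "(\<Sum>j\<in>C. x j) = (\<Sum>b<k. u b / su)" unfolding sumC by (rule sum.cong) (simp_all add: x_def \<kappa>i)
    also have "\<dots> = 1" using supos by (simp add: su_def sum_divide_distrib[symmetric])
    finally show "(\<Sum>j\<in>C. x j) = 1" .
    have "(\<Sum>i\<in>R. y i) = (\<Sum>a<k. v a / su)" unfolding sumR by (rule sum.cong) (simp_all add: y_def \<rho>i)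
    also have "\<dots> = 1" using supos svsu by (simp add: sv_def sum_divide_distrib[symmetric])
    finally show "(\<Sum>i\<in>R. y i) = 1" .
  next
    fix i assume "i \<in> R"
    then obtain a where a: "a < k" "i = \<rho> a" using R\<rho> by blast
    have "(\<Sum>j\<in>C. (1 + s * w (i, j)) * x j) = (\<Sum>b<k. (1 + s * F a b) * (u b / su))"
      unfolding sumC by (rule sum.cong) (simp_all add: x_def \<kappa>i a F_def)
    also have "\<dots> = (\<Sum>b<k. u b) / su + s * (\<Sum>b<k. F a b * u b) / su"
      by (simp add: sum_divide_distrib[symmetric] sum_distrib_left sum.distrib algebra_simps)
    also have "\<dots> = 1 + s / su" using u(1) a(1) supos by (simp add: su_def)
    finally show "(\<Sum>j\<in>C. (1 + s * w (i, j)) * x j) = 1 + s / su" .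
  next
    fix j assume "j \<in> C"
    then obtain b where b: "b < k" "j = \<kappa> b" using C\<kappa> by blast
    have "(\<Sum>i\<in>R. (1 + s * w (i, j)) * y i) = (\<Sum>a<k. (1 + s * F a b) * (v a / su))"
      unfolding sumR by (rule sum.cong) (simp_all add: y_def \<rho>i b F_def)
    also have "\<dots> = (\<Sum>a<k. v a) / su + s * (\<Sum>a<k. F a b * v a) / su"
      by (simp add: sum_divide_distrib[symmetric] sum_distrib_left sum.distrib algebra_simps)
    also have "\<dots> = 1 + s / su" using v(1) b(1) supos svsu by (simp add: sv_def)
    finally show "(\<Sum>i\<in>R. (1 + s * w (i, j)) * y i) = 1 + s / su" .
  qed
  show ?thesis unfolding is_equilibrium_def using a1 body by blast
qed


lemma real_bound:
  fixes m n k :: nat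
  assumes k: "1 \<le> k" "k \<le> m" "k \<le> n"
  shows "2 * (real (m * n) / (4 * real k ^ 2)) ^ k \<le> real ((m choose k) * (n choose k)) * (2 / 4 ^ k)"
proof -
  have kp: "real k > 0" using k by simp
  have base: "real (m * n) / (4 * real k ^ 2) = (real m / real k) * (real n / real k) / 4"
    using kp by (simp add: field_simps power2_eq_square)
  have X: "(real m / real k) ^ k \<le> real (m choose k)" by (rule binomial_ge_n_over_k_pow_k[OF k(2)])
  have Y: "(real n / real k) ^ k \<le> real (n choose k)" by (rule binomial_ge_n_over_k_pow_k[OF k(3)])
  have "(real m / real k) ^ k * (real n / real k) ^ k \<le> real (m choose k) * real (n choose k)"
    by (rule mult_mono[OF X Y]) auto
  hence "2 * ((real m / real k) ^ k * (real n / real k) ^ k) / 4 ^ k \<le> 2 * (real (m choose k) * real (n choose k)) / 4 ^ k"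
    by (intro divide_right_mono mult_left_mono) auto
  thus ?thesis unfolding base by (simp add: power_mult_distrib power_divide field_simps)
qed

theorem corollary9:
  fixes s :: real and m n k :: nat and f :: "real \<Rightarrow> real"
  assumes "s > 0" and "m \<ge> 1" and "n \<ge> 1" and "1 \<le> k" and "k \<le> min m n"
    and "f \<in> borel_measurable borel"
    and "\<forall>x. 0 \<le> f x"
    and "(\<integral>\<^sup>+ x. ennreal (f x) \<partial>lborel) = 1"
    and "\<forall>x. \<bar>x\<bar> > 1 \<longrightarrow> f x = 0"
    and "\<forall>x. f (- x) = f x"
  shows "(\<integral>\<^sup>+ \<omega>. of_nat (num_equilibria m n k (\<lambda>i j. 1 + s * \<omega> (i, j)))
            \<partial>(PiM ({..<m} \<times> {..<n}) (\<lambda>_. density lborel (\<lambda>x. ennreal (f x)))))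
         \<ge> ennreal (2 * (real (m * n) / (4 * real k ^ 2)) ^ k)"
proof -
  note fa = assms(6,7,8,10)
  have k: "1 \<le> k" "k \<le> m" "k \<le> n" using assms(4,5) by auto
  define I where "I = {..<m} \<times> {..<n}"
  have finI: "finite I" by (simp add: I_def)
  have PPeq: "PiM ({..<m} \<times> {..<n}) (\<lambda>_. density lborel (\<lambda>x. ennreal (f x))) = PP f I"
    by (simp add: PP_def[OF fa] NN_def[OF fa] I_def)
  interpret P: prob_space "PP f I" by (rule prob_PP[OF fa])
  define en where "en S = (SOME h. bij_betw h {..<k} S)" for S :: "nat set"
  have en: "bij_betw (en S) {..<k} S" if fS: "finite S" and cS: "card S = k" for S
  proof -
    obtain h where "bij_betw h {0..<card S} S" using ex_bij_betw_nat_finite[OF fS] by blast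
    hence "\<exists>h. bij_betw h {..<k} S" using cS by (auto simp: atLeast0LessThan)
    thus ?thesis unfolding en_def by (rule someI_ex)
  qed
  define T where "T = {R. R \<subseteq> {..<m} \<and> card R = k} \<times> {C. C \<subseteq> {..<n} \<and> card C = k}"
  have finT: "finite T" unfolding T_def
  proof (intro finite_cartesian_product)
    show "finite {R. R \<subseteq> {..<m} \<and> card R = k}"
      by (rule finite_subset[of _ "Pow {..<m}"]) auto
    show "finite {C. C \<subseteq> {..<n} \<and> card C = k}"
      by (rule finite_subset[of _ "Pow {..<n}"]) auto
  qed
  have cardT: "card T = (m choose k) * (n choose k)"
    unfolding T_def card_cartesian_product using n_subsets[of "{..<m}" k] n_subsets[of "{..<n}" k] by simp
  have Tmem: "finite R \<and> card R = k \<and> R \<subseteq> {..<m} \<and> finite C \<and> card C = k \<and> C \<subseteq> {..<n}" if "(R, C) \<in> T" for R C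
  proof -
    have "R \<subseteq> {..<m}" "C \<subseteq> {..<n}" "card R = k" "card C = k" using that by (auto simp: T_def)
    moreover have "finite R" "finite C" using calculation(1,2) by (auto intro: finite_subset[OF _ finite_lessThan])
    ultimately show ?thesis by simp
  qed
  define Ev where "Ev p = {\<omega> \<in> space (PP f I). goodE k (\<lambda>a b. \<omega> (en (fst p) a, en (snd p) b))}" for p
  have inI: "(en R a, en C b) \<in> I" if "(R, C) \<in> T" "a < k" "b < k" for R C a b
  proof -
    have "en R a \<in> R" using en[of R] Tmem[OF that(1)] that(2) by (auto simp: bij_betw_def)
    moreover have "en C b \<in> C" using en[of C] Tmem[OF that(1)] that(3) by (auto simp: bij_betw_def)
    ultimately show ?thesis using Tmem[OF that(1)] by (auto simp: I_def)
  qed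
  have Evsets: "Ev p \<in> sets (PP f I)" if "p \<in> T" for p
  proof -
    obtain R C where p: "p = (R, C)" by fastforce
    show ?thesis unfolding Ev_def p fst_conv snd_conv
      by (rule sets_goodE) (rule comp_PP[OF fa], rule inI, use that p in auto)
  qed
  have Evbound: "ennreal (2 / 4^k) \<le> emeasure (PP f I) (Ev p)" if "p \<in> T" for p
  proof -
    obtain R C where p: "p = (R, C)" by fastforce
    have RC: "(R, C) \<in> T" using that p by simp
    have "2 \<le> of_nat (4^k) * emeasure (PP f I) {\<omega>\<in>space (PP f I). goodE k (\<lambda>a b. \<omega> (en R a, en C b))}"
    proof (rule sub_bound[OF fa finI k(1)])
      show "inj_on (en R) {..<k}" using en[of R] Tmem[OF RC] by (auto simp: bij_betw_def)
      show "inj_on (en C) {..<k}" using en[of C] Tmem[OF RC] by (auto simp: bij_betw_def)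
    qed (rule inI[OF RC])
    hence "2 \<le> of_nat (4^k) * emeasure (PP f I) (Ev p)" by (simp add: Ev_def p)
    hence "ennreal 2 \<le> ennreal (4^k * P.prob (Ev p))"
      by (simp add: P.emeasure_eq_measure ennreal_of_nat_eq_real_of_nat ennreal_mult)
    hence "2 \<le> 4^k * P.prob (Ev p)" by simp
    hence "2 / 4^k \<le> P.prob (Ev p)" by (simp add: divide_le_eq mult.commute)
    thus ?thesis by (simp add: P.emeasure_eq_measure)
  qed
  have cnt: "(\<Sum>p\<in>T. indicator (Ev p) \<omega>) \<le> (of_nat (num_equilibria m n k (\<lambda>i j. 1 + s * \<omega> (i, j))) :: ennreal)" for \<omega>
  proof -
    have "(\<Sum>p\<in>T. indicator (Ev p) \<omega> :: ennreal) \<le> (\<Sum>p\<in>T. if goodE k (\<lambda>a b. \<omega> (en (fst p) a, en (snd p) b)) then 1 else 0)"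
      by (intro sum_mono) (auto simp: indicator_def Ev_def)
    also have "\<dots> = of_nat (card {p\<in>T. goodE k (\<lambda>a b. \<omega> (en (fst p) a, en (snd p) b))})"
      by (rule sum_if_card[OF finT])
    also have "\<dots> \<le> of_nat (num_equilibria m n k (\<lambda>i j. 1 + s * \<omega> (i, j)))"
      unfolding num_equilibria_def
    proof (intro of_nat_mono card_mono)
      show "finite {(R, C). R \<subseteq> {..<m} \<and> card R = k \<and> C \<subseteq> {..<n} \<and> card C = k \<and> is_equilibrium (\<lambda>i j. 1 + s * \<omega> (i, j)) R C}"
        by (rule finite_subset[OF _ finT]) (auto simp: T_def)
      show "{p \<in> T. goodE k (\<lambda>a b. \<omega> (en (fst p) a, en (snd p) b))}
          \<subseteq> {(R, C). R \<subseteq> {..<m} \<and> card R = k \<and> C \<subseteq> {..<n} \<and> card C = k \<and> is_equilibrium (\<lambda>i j. 1 + s * \<omega> (i, j)) R C}"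
      proof
        fix p assume pin: "p \<in> {p \<in> T. goodE k (\<lambda>a b. \<omega> (en (fst p) a, en (snd p) b))}"
        obtain R C where p: "p = (R, C)" by fastforce
        have RC: "(R, C) \<in> T" and g: "goodE k (\<lambda>a b. \<omega> (en R a, en C b))" using pin p by auto
        have "is_equilibrium (\<lambda>i j. 1 + s * \<omega> (i, j)) R C"
          by (rule good_equil[OF assms(1) k(1)]) (use en Tmem[OF RC] g in auto)
        thus "p \<in> {(R, C). R \<subseteq> {..<m} \<and> card R = k \<and> C \<subseteq> {..<n} \<and> card C = k \<and> is_equilibrium (\<lambda>i j. 1 + s * \<omega> (i, j)) R C}"
          using Tmem[OF RC] p by auto
      qed
    qed
    finally show ?thesis .
  qed
  have "ennreal (2 * (real (m * n) / (4 * real k ^ 2)) ^ k) \<le> ennreal (real (card T) * (2 / 4 ^ k))"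
    using real_bound[OF k] cardT by (intro ennreal_leI) simp
  also have "\<dots> = ennreal (real (card T)) * ennreal (2 / 4 ^ k)"
    by (rule ennreal_mult) auto
  also have "\<dots> = (\<Sum>p\<in>T. ennreal (2 / 4^k))"
    by (simp add: ennreal_of_nat_eq_real_of_nat)
  also have "\<dots> \<le> (\<Sum>p\<in>T. emeasure (PP f I) (Ev p))"
    by (rule sum_mono) (rule Evbound)
  also have "\<dots> = (\<Sum>p\<in>T. (\<integral>\<^sup>+\<omega>. indicator (Ev p) \<omega> \<partial>(PP f I)))"
    by (rule sum.cong) (simp_all add: Evsets)
  also have "\<dots> = (\<integral>\<^sup>+\<omega>. (\<Sum>p\<in>T. indicator (Ev p) \<omega>) \<partial>(PP f I))"
    by (rule nn_integral_sum[symmetric]) (rule borel_measurable_indicator, rule Evsets)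
  also have "\<dots> \<le> (\<integral>\<^sup>+\<omega>. of_nat (num_equilibria m n k (\<lambda>i j. 1 + s * \<omega> (i, j))) \<partial>(PP f I))"
    by (rule nn_integral_mono) (rule cnt)
  finally show ?thesis unfolding PPeq .
qed


end
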